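(* Let $1\le k<n/2$ and let $\Omega$ be the set of $k$-subsets of $\{1,\dots,n\}$ with the natural action of $\mathrm{Sym}(n)$. Then $\mathrm{Sym}(n)$ contains an element of prime order $p$ that is quasi-semiregular on $\Omega$ if and only if $k<p$ and $p\mid n-k$. Moreover, any such quasi-semiregular element of order $p$ has cycle type $1^kp^{(n-k)/p}$ on $\{1,\dots,n\}$.
   Context: A permutation $g$ is quasi-semiregular if $\langle g\rangle$ has a unique fixed point and acts semiregularly (only the identity fixes a point) on the remaining points. *)

theory Defs
  imports "HOL-Algebra.Sym_Groups" "HOL-Algebra.Multiplicative_Group" "HOL-Computational_Algebra.Primes"
begin

definition quasi_semiregular ::
  "('g, 'b) monoid_scheme \<Rightarrow> ('g \<Rightarrow> 'a \<Rightarrow> 'a) \<Rightarrow> 'a set \<Rightarrow> 'g \<Rightarrow> bool" where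
  "quasi_semiregular G phi Omega g \<longleftrightarrow>
     (\<exists>w0\<in>Omega.
        {w\<in>Omega. \<forall>h\<in>generate G {g}. phi h w = w} = {w0} \<and>
        (\<forall>w\<in>Omega - {w0}. \<forall>h\<in>generate G {g}. phi h w = w \<longrightarrow> h = \<one>\<^bsub>G\<^esub>))"

definition k_subsets :: "nat \<Rightarrow> nat \<Rightarrow> nat set set" where
  "k_subsets n k = {A. A \<subseteq> {1..n} \<and> card A = k}"

definition set_action :: "(nat \<Rightarrow> nat) \<Rightarrow> nat set \<Rightarrow> nat set" where
  "set_action g A = g ` A"

text \<open>Cycle type 1^k p^((n-k)/p) on {1..n}: exactly k fixed points, and every
  other point lies in a cycle of length p.\<close>
definition has_cycle_type_1k_p :: "nat \<Rightarrow> nat \<Rightarrow> nat \<Rightarrow> (nat \<Rightarrow> nat) \<Rightarrow> bool" where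
  "has_cycle_type_1k_p n k p g \<longleftrightarrow>
     card {x\<in>{1..n}. g x = x} = k \<and>
     (\<forall>x\<in>{1..n}. g x \<noteq> x \<longrightarrow> least_power g x = p)"

end

theory Submission
  imports Defs
begin


locale pp =
  fixes g :: "nat \<Rightarrow> nat" and n p :: nat
  assumes perm: "g permutes {1..n}" and pid: "g ^^ p = id" and pr: "prime p"
begin

lemma inj_g: "inj g" using perm permutes_inj by blast
lemma inj_pow: "inj (g ^^ i)" using inj_g inj_fn by blast

lemma p_pos: "p > 0" using pr prime_gt_0_nat by blast
lemma p_gt1: "p > 1" using pr prime_gt_1_nat by blast

lemma pow_mult_p: "g ^^ (p * t) = id"
proof (induction t)
  case (Suc t)
  have "g ^^ (p * Suc t) = g ^^ p \<circ> g ^^ (p * t)" by (simp add: funpow_add[symmetric])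
  then show ?case using Suc pid by simp
qed simp

lemma pow_mod: "g ^^ i = g ^^ (i mod p)"
proof -
  have "g ^^ i = g ^^ (i mod p + p * (i div p))" by simp
  also have "\<dots> = g ^^ (i mod p)" by (simp only: funpow_add pow_mult_p) simp
  finally show ?thesis .
qed

lemma pow_dvd: "p dvd i \<Longrightarrow> g ^^ i = id"
  using pow_mod[of i] by (simp add: dvd_eq_mod_eq_0)

lemma img_pow: "g ` w = w \<Longrightarrow> (g ^^ i) ` w = w"
proof (induction i)
  case (Suc i)
  have "(g ^^ Suc i) ` w = g ` ((g ^^ i) ` w)" by (simp add: image_image)
  then show ?case using Suc by simp
qed simp

lemma pow_set:
  assumes "\<not> p dvd i" "(g ^^ i) ` w = w"
  shows "g ` w = w"
proof -
  have "coprime i p" using assms(1) pr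
    by (metis coprime_commute prime_imp_coprime)
  hence "gcd i p = 1" by simp
  have "i \<noteq> 0" using assms(1) by (metis dvd_0_right)
  then obtain x y where xy: "i * x = p * y + gcd i p" using bezout_nat by blast
  hence xy': "i * x = Suc (p * y)" using \<open>gcd i p = 1\<close> by simp
  have "((g ^^ i) ^^ x) ` w = w"
  proof (induction x)
    case (Suc x)
    have "((g ^^ i) ^^ Suc x) ` w = (g ^^ i) ` (((g ^^ i) ^^ x) ` w)" by (simp add: image_image)
    then show ?case using Suc assms(2) by simp
  qed simp
  hence "(g ^^ (Suc (p * y))) ` w = w" by (simp add: funpow_mult xy')
  moreover have "g ^^ (Suc (p * y)) = g"
    by (simp only: funpow_Suc_right pow_mult_p) simp
  ultimately show ?thesis by metis
qed

lemma pow_point: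
  assumes "\<not> p dvd i" "(g ^^ i) x = x" shows "g x = x"
  using pow_set[of i "{x}"] assms by simp

lemma nonfix_pow: "g x \<noteq> x \<Longrightarrow> (g ^^ i) x = x \<longleftrightarrow> p dvd i"
  using pow_point pow_dvd by (metis id_apply)

definition orb :: "nat \<Rightarrow> nat set" where "orb x = range (\<lambda>i. (g ^^ i) x)"

lemma orb_self: "x \<in> orb x" unfolding orb_def by (metis funpow_0 rangeI)

lemma orb_lt: "orb x = (\<lambda>i. (g ^^ i) x) ` {..<p}"
  unfolding orb_def using pow_mod p_pos
  by (auto intro!: image_eqI[where x="_ mod p"])

lemma orb_card: assumes "g x \<noteq> x" shows "card (orb x) = p"
proof -
  have "inj_on (\<lambda>i. (g ^^ i) x) {..<p}"
  proof (rule inj_onI)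
    fix i j assume ij: "i \<in> {..<p}" "j \<in> {..<p}" "(g ^^ i) x = (g ^^ j) x"
    show "i = j"
    proof (rule ccontr)
      assume "i \<noteq> j"
      then consider "i < j" | "j < i" by linarith
      then show False
      proof cases
        case 1
        have "(g ^^ j) x = (g ^^ i) ((g ^^ (j - i)) x)"
          using 1 by (metis funpow_add le_add_diff_inverse less_imp_le o_apply)
        hence "(g ^^ (j - i)) x = x" using ij(3) inj_pow by (metis injD)
        hence "p dvd (j - i)" using nonfix_pow assms by blast
        moreover have "0 < j - i" "j - i < p" using 1 ij by auto
        ultimately show False by (meson dvd_imp_le not_le)
      next
        case 2
        have "(g ^^ i) x = (g ^^ j) ((g ^^ (i - j)) x)"
          using 2 by (metis funpow_add le_add_diff_inverse less_imp_le o_apply)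
        hence "(g ^^ (i - j)) x = x" using ij(3) inj_pow by (metis injD)
        hence "p dvd (i - j)" using nonfix_pow assms by blast
        moreover have "0 < i - j" "i - j < p" using 2 ij by auto
        ultimately show False by (meson dvd_imp_le not_le)
      qed
    qed
  qed
  thus ?thesis unfolding orb_lt by (simp add: card_image)
qed

lemma orb_finite: "finite (orb x)" unfolding orb_lt by simp

lemma orb_inv: "g ` orb x = orb x"
proof
  show "g ` orb x \<subseteq> orb x" unfolding orb_def
    by (auto simp del: funpow.simps simp: funpow.simps(2)[symmetric] o_def)
       (metis funpow.simps(2) comp_apply rangeI)
  show "orb x \<subseteq> g ` orb x"
  proof
    fix y assume "y \<in> orb x"
    then obtain i where y: "y = (g ^^ i) x" unfolding orb_def by blast
    have "g ^^ (i + p * 1) = g ^^ i" by (simp only: funpow_add pow_mult_p) simp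
    hence "y = (g ^^ Suc (i + p - 1)) x" using y p_pos by simp
    thus "y \<in> g ` orb x" unfolding orb_def by simp
  qed
qed

lemma orb_sub: "x \<in> {1..n} \<Longrightarrow> orb x \<subseteq> {1..n}"
  unfolding orb_def using permutes_in_funpow_image[OF perm] by blast

lemma orb_nonfix: assumes "g x \<noteq> x" "y \<in> orb x" shows "g y \<noteq> y"
proof
  assume "g y = y"
  obtain i where y: "y = (g ^^ i) x" using assms(2) unfolding orb_def by blast
  have "(g ^^ i) (g x) = (g ^^ i) x"
    using \<open>g y = y\<close> y by (metis comp_apply funpow_Suc_right funpow_swap1)
  thus False using inj_pow assms(1) by (metis injD)
qed

lemma orb_eq: assumes "y \<in> orb x" shows "orb y = orb x"
proof -
  obtain i where y: "y = (g ^^ i) x" using assms unfolding orb_def by blast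
  have 1: "orb y \<subseteq> orb x" unfolding orb_def y by (auto simp: funpow_add[symmetric] simp del: funpow_add)
       (metis comp_apply funpow_add rangeI)
  have "x = (g ^^ (p * i - i)) y"
  proof -
    have "p * i \<ge> i" using p_pos by simp
    have "(g ^^ (p * i - i)) y = (g ^^ (p * i - i + i)) x" by (simp only: y funpow_add o_apply)
    also have "\<dots> = x" using \<open>p * i \<ge> i\<close> pow_mult_p by simp
    finally show ?thesis by simp
  qed
  hence "x \<in> orb y" unfolding orb_def by blast
  hence "orb x \<subseteq> orb y" unfolding orb_def 
    by (auto) (metis comp_apply funpow_add rangeI)
  with 1 show ?thesis by blast
qed

lemma inv_orb_sub: "g ` w = w \<Longrightarrow> x \<in> w \<Longrightarrow> orb x \<subseteq> w"
  unfolding orb_def using img_pow by blast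

definition Fx where "Fx = {x\<in>{1..n}. g x = x}"
definition Xn where "Xn = {x\<in>{1..n}. g x \<noteq> x}"

lemma dvd_Xn: "p dvd card Xn"
proof -
  have U: "\<Union>(orb ` Xn) = Xn"
  proof
    show "\<Union>(orb ` Xn) \<subseteq> Xn" unfolding Xn_def using orb_sub orb_nonfix by fastforce
    show "Xn \<subseteq> \<Union>(orb ` Xn)" using orb_self by blast
  qed
  have "p * card (orb ` Xn) = card (\<Union>(orb ` Xn))"
  proof (rule card_partition)
    show "finite (orb ` Xn)" unfolding Xn_def by simp
    show "finite (\<Union>(orb ` Xn))" using orb_finite Xn_def by simp
    show "\<And>c. c \<in> orb ` Xn \<Longrightarrow> card c = p" unfolding Xn_def using orb_card by auto
    show "\<And>c1 c2. c1 \<in> orb ` Xn \<Longrightarrow> c2 \<in> orb ` Xn \<Longrightarrow> c1 \<noteq> c2 \<Longrightarrow> c1 \<inter> c2 = {}"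
      using orb_eq by blast
  qed
  thus ?thesis using U by (metis dvd_triv_left)
qed

lemma card_Xn: "card Xn = n - card Fx"
proof -
  have "Xn = {1..n} - Fx" unfolding Xn_def Fx_def by auto
  moreover have "Fx \<subseteq> {1..n}" unfolding Fx_def by auto
  ultimately show ?thesis by (simp add: card_Diff_subset finite_subset)
qed

end



context pp begin

lemma fix_img: assumes "S \<subseteq> Fx" shows "g ` S = S"
proof -
  have "\<And>x. x \<in> S \<Longrightarrow> g x = id x" using assms unfolding Fx_def by auto
  hence "g ` S = id ` S" by (rule image_cong[OF refl])
  thus ?thesis by simp
qed

lemma swap:
  assumes "w \<subseteq> {1..n}" "g ` w = w" "C \<subseteq> w" "g ` C = C" "D \<subseteq> {1..n} - w" "g ` D = D"
    "card C = card D" "D \<noteq> {}"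
  shows "w - C \<union> D \<subseteq> {1..n}" "card (w - C \<union> D) = card w" "g ` (w - C \<union> D) = w - C \<union> D"
    "w - C \<union> D \<noteq> w"
proof -
  show "w - C \<union> D \<subseteq> {1..n}" using assms by auto
  have fw: "finite w" using assms(1) finite_subset by blast
  have fD: "finite D" using assms(5) finite_subset by blast
  have "card (w - C \<union> D) = card (w - C) + card D"
    by (rule card_Un_disjoint) (use assms fw fD in auto)
  also have "card (w - C) = card w - card C" using assms(3) fw by (simp add: card_Diff_subset finite_subset)
  finally show "card (w - C \<union> D) = card w" using assms(3,7) card_mono[OF fw assms(3)] by simp
  have "g ` (w - C \<union> D) = (g ` w - g ` C) \<union> g ` D" using inj_g by (simp add: image_Un image_set_diff)
  thus "g ` (w - C \<union> D) = w - C \<union> D" using assms by simp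
  show "w - C \<union> D \<noteq> w" using assms(5,8) by blast
qed

lemma forward:
  assumes uniq: "\<And>w. w \<subseteq> {1..n} \<Longrightarrow> card w = k \<Longrightarrow> g ` w = w \<Longrightarrow> w = w0"
    and w0: "w0 \<subseteq> {1..n}" "card w0 = k" "g ` w0 = w0" and k: "1 \<le> k" "2 * k < n"
  shows "w0 = Fx \<and> k < p"
proof -
  have sw: False if "C \<subseteq> w0" "g ` C = C" "D \<subseteq> {1..n} - w0" "g ` D = D"
    "card C = card D" "D \<noteq> {}" for C D
    using swap[OF w0(1) w0(3) that] uniq w0(2) by metis
  have fw: "finite w0" using w0(1) finite_subset by blast
  have cR: "card ({1..n} - w0) = n - k" using w0 by (simp add: card_Diff_subset fw)
  have A: "w0 \<subseteq> Fx"
  proof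
    fix x assume x: "x \<in> w0"
    show "x \<in> Fx"
    proof (rule ccontr)
      assume "x \<notin> Fx"
      hence gx: "g x \<noteq> x" using x w0(1) unfolding Fx_def by auto
      have C: "orb x \<subseteq> w0" using inv_orb_sub[OF w0(3) x] .
      have cC: "card (orb x) = p" using orb_card[OF gx] .
      have "p \<le> k" using C cC w0(2) fw card_mono by metis
      show False
      proof (cases "\<exists>y\<in>{1..n} - w0. g y \<noteq> y")
        case True
        then obtain y where y: "y \<in> {1..n} - w0" "g y \<noteq> y" by blast
        have D: "orb y \<subseteq> {1..n} - w0"
        proof
          fix z assume z: "z \<in> orb y"
          have "z \<in> {1..n}" using orb_sub y(1) z by blast
          moreover have "z \<notin> w0"
          proof
            assume "z \<in> w0"
            hence "orb z \<subseteq> w0" using inv_orb_sub[OF w0(3)] by blast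
            thus False using orb_eq[OF z] orb_self[of y] y(1) by blast
          qed
          ultimately show "z \<in> {1..n} - w0" by blast
        qed
        show False using sw[OF C orb_inv D orb_inv] cC orb_card[OF y(2)] orb_self[of y] by auto
      next
        case False
        have "p \<le> card ({1..n} - w0)" using cR \<open>p \<le> k\<close> k by linarith
        then obtain D where D: "D \<subseteq> {1..n} - w0" "card D = p" "finite D"
          by (rule obtain_subset_with_card_n)
        have "D \<subseteq> Fx" using D(1) False unfolding Fx_def by auto
        hence "g ` D = D" by (rule fix_img)
        moreover have "D \<noteq> {}" using D(2) p_pos by auto
        ultimately show False using sw[OF C orb_inv D(1)] cC D(2) by metis
      qed
    qed
  qed
  have B: "Fx \<subseteq> w0"
  proof
    fix y assume y: "y \<in> Fx"
    show "y \<in> w0"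
    proof (rule ccontr)
      assume yn: "y \<notin> w0"
      obtain x where x: "x \<in> w0" using w0(2) k(1) by fastforce
      have "g ` {x} = {x}" "g ` {y} = {y}" using A x y unfolding Fx_def by auto
      moreover have "{y} \<subseteq> {1..n} - w0" using y yn unfolding Fx_def by auto
      ultimately show False using sw[of "{x}" "{y}"] x by auto
    qed
  qed
  have E: "w0 = Fx" using A B by blast
  have "k < p"
  proof (rule ccontr)
    assume "\<not> k < p"
    hence "p \<le> card w0" using w0(2) by simp
    then obtain C where C: "C \<subseteq> w0" "card C = p" "finite C"
      by (rule obtain_subset_with_card_n)
    have gC: "g ` C = C" using subset_trans[OF C(1) A] by (rule fix_img)
    have "{1..n} - w0 \<noteq> {}"
    proof
      assume "{1..n} - w0 = {}"
      hence "card ({1..n} - w0) = 0" by simp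
      with cR k show False by linarith
    qed
    then obtain y where y: "y \<in> {1..n}" "y \<notin> w0" by blast
    hence gy: "g y \<noteq> y" using B unfolding Fx_def by auto
    have D: "orb y \<subseteq> {1..n} - w0"
      using orb_sub[OF y(1)] orb_nonfix[OF gy] E unfolding Fx_def by auto
    show False using sw[OF C(1) gC D orb_inv] C(2) orb_card[OF gy] orb_self[of y] by auto
  qed
  with E show ?thesis by blast
qed

end



definition hh :: "nat \<Rightarrow> nat \<Rightarrow> nat" where "hh p r = (r div p) * p + (Suc r) mod p"
definition gc :: "nat \<Rightarrow> nat \<Rightarrow> nat \<Rightarrow> nat \<Rightarrow> nat" where
  "gc n k p x = (if k < x \<and> x \<le> n then Suc k + hh p (x - Suc k) else x)"

lemma bound:
  fixes m p r s :: nat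
  assumes "p dvd m" "r < m" "s < p"
  shows "(r div p) * p + s < m"
proof -
  obtain t where t: "m = p * t" using assms(1) by blast
  have "p > 0" using assms(3) by simp
  have "r div p < t" using assms(2) t \<open>p > 0\<close> by (simp add: div_less_iff_less_mult mult.commute)
  hence "Suc (r div p) * p \<le> t * p" by (metis Suc_leI mult_le_mono1)
  thus ?thesis using assms(3) t by (simp add: mult.commute)
qed

lemma gc_iter:
  assumes "p dvd (n - k)" "p > 0"
  shows "(gc n k p ^^ i) x = (if k < x \<and> x \<le> n then Suc k + ((x - Suc k) div p) * p + (x - Suc k + i) mod p else x)"
proof (induction i)
  case 0
  then show ?case by simp
next
  case (Suc i)
  show ?case
  proof (cases "k < x \<and> x \<le> n")
    case True
    define r where "r = x - Suc k"
    define q where "q = r div p"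
    define s where "s = (r + i) mod p"
    have s: "s < p" using assms(2) s_def by simp
    have "r < n - k" using True r_def by linarith
    hence b: "q * p + s < n - k" using bound[OF assms(1) _ s] q_def by blast
    have IH: "(gc n k p ^^ i) x = Suc k + q * p + s" using Suc True r_def q_def s_def by simp
    have "(gc n k p ^^ Suc i) x = gc n k p (Suc k + q * p + s)" using IH by simp
    also have "\<dots> = Suc k + hh p (q * p + s)" unfolding gc_def using b by (simp, linarith)
    also have "hh p (q * p + s) = q * p + (Suc s) mod p"
    proof -
      have d: "(q * p + s) div p = q" using s by (simp add: add.commute[of "q*p"])
      have "Suc (q * p + s) = Suc s + q * p" by simp
      hence m: "Suc (q * p + s) mod p = Suc s mod p" by (simp only: mod_mult_self1)
      show ?thesis unfolding hh_def d m ..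
    qed
    also have "Suc s mod p = (r + Suc i) mod p" unfolding s_def by (simp add: mod_Suc_eq)
    finally show ?thesis using True r_def q_def by simp
  next
    case False
    have "(gc n k p ^^ i) x = x" using Suc.IH False by simp
    hence "(gc n k p ^^ Suc i) x = gc n k p x" by simp
    also have "\<dots> = x" unfolding gc_def by (rule if_not_P[OF False])
    finally show ?thesis by (simp only: if_not_P[OF False])
  qed
qed




context pp begin
lemma qsr_iff:
  assumes gen: "generate G {g} = range (\<lambda>i. g ^^ i)" and one: "one G = id"
  shows "quasi_semiregular G set_action Om g \<longleftrightarrow> (\<exists>w0\<in>Om. g ` w0 = w0 \<and> (\<forall>w\<in>Om. g ` w = w \<longrightarrow> w = w0))"
proof
  assume "quasi_semiregular G set_action Om g"
  hence "\<exists>w0\<in>Om. {w\<in>Om. \<forall>h\<in>generate G {g}. set_action h w = w} = {w0} \<and>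
        (\<forall>w\<in>Om - {w0}. \<forall>h\<in>generate G {g}. set_action h w = w \<longrightarrow> h = \<one>\<^bsub>G\<^esub>)"
    unfolding quasi_semiregular_def .
  then obtain w0 where w0a: "w0 \<in> Om" and w0b: "{w\<in>Om. \<forall>h\<in>generate G {g}. set_action h w = w} = {w0} \<and>
        (\<forall>w\<in>Om - {w0}. \<forall>h\<in>generate G {g}. set_action h w = w \<longrightarrow> h = \<one>\<^bsub>G\<^esub>)"
    by (rule bexE)
  have w0: "w0 \<in> Om" "{w\<in>Om. \<forall>h\<in>generate G {g}. set_action h w = w} = {w0}"
    using w0a w0b by simp_all
  have gg: "g \<in> generate G {g}" unfolding gen by (rule range_eqI[of _ _ 1]) simp
  have "g ` w0 = w0" using w0 gg unfolding set_action_def by blast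
  moreover have "w = w0" if "w \<in> Om" "g ` w = w" for w
  proof -
    have "\<forall>h\<in>generate G {g}. set_action h w = w" unfolding gen set_action_def using img_pow that(2) by auto
    thus ?thesis using w0(2) that(1) by blast
  qed
  ultimately show "\<exists>w0\<in>Om. g ` w0 = w0 \<and> (\<forall>w\<in>Om. g ` w = w \<longrightarrow> w = w0)" using w0(1) by blast
next
  assume "\<exists>w0\<in>Om. g ` w0 = w0 \<and> (\<forall>w\<in>Om. g ` w = w \<longrightarrow> w = w0)"
  then obtain w0 where w0a: "w0 \<in> Om" and w0b: "g ` w0 = w0 \<and> (\<forall>w\<in>Om. g ` w = w \<longrightarrow> w = w0)"
    by (rule bexE)
  have w03: "w = w0" if "w\<in>Om" "g ` w = w" for w
    using mp[OF bspec[OF w0b[THEN conjunct2] that(1)] that(2)] .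
  note w0 = w0a w0b[THEN conjunct1] w03
  have gg: "g \<in> generate G {g}" unfolding gen by (rule range_eqI[of _ _ 1]) simp
  have A: "{w\<in>Om. \<forall>h\<in>generate G {g}. set_action h w = w} = {w0}"
  proof
    show "{w\<in>Om. \<forall>h\<in>generate G {g}. set_action h w = w} \<subseteq> {w0}"
    proof (rule subsetI)
      fix w assume "w \<in> {w\<in>Om. \<forall>h\<in>generate G {g}. set_action h w = w}"
      hence "w \<in> Om" "set_action g w = w" using gg by auto
      thus "w \<in> {w0}" using w0(3)[of w] by (simp add: set_action_def)
    qed
    show "{w0} \<subseteq> {w\<in>Om. \<forall>h\<in>generate G {g}. set_action h w = w}"
      using w0(1,2) img_pow unfolding gen set_action_def by auto
  qed
  have B: "\<forall>w\<in>Om - {w0}. \<forall>h\<in>generate G {g}. set_action h w = w \<longrightarrow> h = \<one>\<^bsub>G\<^esub>"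
  proof (intro ballI impI)
    fix w h assume w: "w \<in> Om - {w0}" and h: "h \<in> generate G {g}" and hw: "set_action h w = w"
    obtain i where hi: "h = g ^^ i" using h unfolding gen by blast
    have "p dvd i"
    proof (rule ccontr)
      assume "\<not> p dvd i"
      hence "g ` w = w" using pow_set[of i w] hw hi unfolding set_action_def by simp
      thus False using w w0(3)[of w] by simp
    qed
    thus "h = \<one>\<^bsub>G\<^esub>" using pow_dvd hi one by simp
  qed
  show "quasi_semiregular G set_action Om g" unfolding quasi_semiregular_def
    apply (rule bexI[of _ w0])
     apply (rule conjI[OF A B])
    by (rule w0(1))
qed
end

lemma sym_pow: "g [^]\<^bsub>sym_group n\<^esub> (i::nat) = g ^^ i"
proof (induction i)
  case 0
  then show ?case by (simp add: sym_group_one)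
next
  case (Suc i)
  have "g [^]\<^bsub>sym_group n\<^esub> Suc i = g [^]\<^bsub>sym_group n\<^esub> i \<otimes>\<^bsub>sym_group n\<^esub> g" by (rule nat_pow_Suc)
  also have "\<dots> = (g ^^ i) \<circ> g" by (simp only: Suc sym_group_mult)
  also have "\<dots> = g ^^ Suc i" by (rule funpow_Suc_right[symmetric])
  finally show ?case .
qed

lemma sym_facts:
  assumes "g \<in> carrier (sym_group n)" "group.ord (sym_group n) g = p" "prime p"
  shows "g ^^ p = id" "g \<noteq> id" "generate (sym_group n) {g} = range (\<lambda>i. g ^^ i)"
proof -
  have grp: "group (sym_group n)" by (rule sym_group_is_group)
  have "g [^]\<^bsub>sym_group n\<^esub> p = \<one>\<^bsub>sym_group n\<^esub>" using group.pow_eq_id[OF grp assms(1), of p] assms(2) by simp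
  thus "g ^^ p = id" by (simp add: sym_pow sym_group_one)
  show "g \<noteq> id"
  proof
    assume "g = id"
    hence "group.ord (sym_group n) g = 1" using group.ord_eq_1[OF grp assms(1)] by (simp add: sym_group_one)
    thus False using assms(2,3) by simp
  qed
  have "p \<noteq> 0" using assms(3) by auto
  hence "generate (sym_group n) {g} = {g [^]\<^bsub>sym_group n\<^esub> k |k. k \<in> (UNIV::nat set)}"
    using group.generate_pow_nat[OF grp assms(1)] assms(2) by simp
  thus "generate (sym_group n) {g} = range (\<lambda>i. g ^^ i)" by (auto simp: sym_pow)
qed

lemma ord_sym:
  assumes "g \<in> carrier (sym_group n)" "g ^^ p = id" "g \<noteq> id" "prime p"
  shows "group.ord (sym_group n) g = p"
proof -
  have grp: "group (sym_group n)" by (rule sym_group_is_group)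
  have "g [^]\<^bsub>sym_group n\<^esub> p = \<one>\<^bsub>sym_group n\<^esub>" using assms(2) by (simp add: sym_pow sym_group_one)
  hence "group.ord (sym_group n) g dvd p" using group.pow_eq_id[OF grp assms(1), of p] by simp
  moreover have "group.ord (sym_group n) g \<noteq> 1" using group.ord_eq_1[OF grp assms(1)] assms(3) by (simp add: sym_group_one)
  ultimately show ?thesis using prime_nat_iff[THEN iffD1, OF assms(4), THEN conjunct2, rule_format, of "group.ord (sym_group n) g"] by simp
qed




lemma gc_props:
  assumes "1 \<le> k" "2 * k < n" "prime p" "k < p" "p dvd (n - k)"
  shows "gc n k p ^^ p = id" "\<And>x. gc n k p x = x \<longleftrightarrow> \<not> (k < x \<and> x \<le> n)"
    "gc n k p permutes {1..n}" "gc n k p \<noteq> id"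
proof -
  have p0: "p > 0" using assms(3) prime_gt_0_nat by blast
  have p1: "p > 1" using assms(3) prime_gt_1_nat by blast
  show pid: "gc n k p ^^ p = id"
  proof
    fix x
    show "(gc n k p ^^ p) x = id x"
    proof (cases "k < x \<and> x \<le> n")
      case True
      have "(gc n k p ^^ p) x = Suc k + ((x - Suc k) div p) * p + (x - Suc k + p) mod p"
        using gc_iter[OF assms(5) p0, of p x] True by simp
      also have "\<dots> = Suc k + (x - Suc k)" by simp
      also have "\<dots> = x" using True by simp
      finally show ?thesis by simp
    next
      case False
      have "(gc n k p ^^ p) x = x" using gc_iter[OF assms(5) p0, of p x] by (simp only: if_not_P[OF False])
      thus ?thesis by simp
    qed
  qed
  show fx: "gc n k p x = x \<longleftrightarrow> \<not> (k < x \<and> x \<le> n)" for x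
  proof (cases "k < x \<and> x \<le> n")
    case True
    define r where "r = x - Suc k"
    have x: "x = Suc k + (r div p * p + r mod p)" using True r_def by simp
    have g: "gc n k p x = Suc k + (r div p * p + Suc r mod p)" using True r_def unfolding gc_def hh_def by simp
    have "Suc r mod p \<noteq> r mod p" using p1 by (simp add: mod_Suc)
    hence ne: "r div p * p + Suc r mod p \<noteq> r" by (metis div_mult_mod_eq add_left_cancel)
    have "x = Suc k + r" using True r_def by simp
    hence "gc n k p x \<noteq> x" using g ne by simp
    thus ?thesis using True by simp
  next
    case False
    have "gc n k p x = x" unfolding gc_def by (rule if_not_P[OF False])
    then show ?thesis using False by simp
  qed
  have b: "bij (gc n k p)"
  proof (rule o_bij)
    have "gc n k p ^^ Suc (p - 1) = id" using pid p0 by simp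
    thus "gc n k p ^^ (p - 1) \<circ> gc n k p = id" by (simp only: funpow_Suc_right)
    show "gc n k p \<circ> gc n k p ^^ (p - 1) = id" using \<open>gc n k p ^^ Suc (p - 1) = id\<close> by simp
  qed
  show "gc n k p permutes {1..n}" unfolding permutes_def
  proof (intro conjI allI impI)
    show "gc n k p x = x" if "x \<notin> {1..n}" for x using fx[of x] that assms(1) by auto
    show "\<exists>!x. gc n k p x = y" for y using b bij_iff by metis
  qed
  show "gc n k p \<noteq> id"
  proof
    assume "gc n k p = id"
    hence "gc n k p (Suc k) = Suc k" by simp
    thus False using fx[of "Suc k"] assms(1,2) by simp
  qed
qed

theorem proposition6p2:
  fixes n k p :: nat
  assumes "1 \<le> k" and "2 * k < n" and "prime p"
  shows "((\<exists>g\<in>carrier (sym_group n). group.ord (sym_group n) g = p \<and>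
             quasi_semiregular (sym_group n) set_action (k_subsets n k) g)
          \<longleftrightarrow> (k < p \<and> p dvd (n - k)))
       \<and> (\<forall>g\<in>carrier (sym_group n). group.ord (sym_group n) g = p \<and>
             quasi_semiregular (sym_group n) set_action (k_subsets n k) g
             \<longrightarrow> has_cycle_type_1k_p n k p g)"
proof -
  have fwd: "k < p \<and> p dvd (n - k) \<and> has_cycle_type_1k_p n k p g"
    if g: "g \<in> carrier (sym_group n)" "group.ord (sym_group n) g = p"
      "quasi_semiregular (sym_group n) set_action (k_subsets n k) g" for g
  proof -
    note sf = sym_facts[OF g(1,2) assms(3)]
    have perm: "g permutes {1..n}" using g(1) sym_group_carrier by blast
    interpret P: pp g n p by unfold_locales (fact perm, fact sf(1), fact assms(3))
    have "\<exists>w0\<in>k_subsets n k. g ` w0 = w0 \<and> (\<forall>w\<in>k_subsets n k. g ` w = w \<longrightarrow> w = w0)"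
      using iffD1[OF P.qsr_iff[OF sf(3) sym_group_one] g(3)] .
    then obtain w0 where w0a: "w0 \<in> k_subsets n k"
      and w0b: "g ` w0 = w0 \<and> (\<forall>w\<in>k_subsets n k. g ` w = w \<longrightarrow> w = w0)"
      by (rule bexE)
    note w0 = w0a w0b[THEN conjunct1]
    note uq = w0b[THEN conjunct2]
    have uq': "w = w0" if "w \<subseteq> {1..n}" "card w = k" "g ` w = w" for w
    proof -
      have "w \<in> k_subsets n k" using that(1,2) unfolding k_subsets_def by simp
      thus ?thesis using uq[rule_format, of w] that(3) by simp
    qed
    have w0': "w0 \<subseteq> {1..n}" "card w0 = k" using w0(1) unfolding k_subsets_def by auto
    have F: "w0 = P.Fx \<and> k < p" using P.forward[OF uq' w0'(1,2) w0(2) assms(1,2)] .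
    have cF: "card P.Fx = k" using F w0' by simp
    have dv: "p dvd (n - k)" using P.dvd_Xn P.card_Xn cF by simp
    have ct: "has_cycle_type_1k_p n k p g"
      unfolding has_cycle_type_1k_p_def
    proof (intro conjI ballI impI)
      show "card {x \<in> {1..n}. g x = x} = k" using cF unfolding P.Fx_def .
      fix x assume x: "x \<in> {1..n}" "g x \<noteq> x"
      have pm: "permutation g" using g(1) sym_group_carrier' by blast
      have "least_power g x dvd p" using least_power_dvd[OF pm] sf(1) by simp
      moreover have "least_power g x \<noteq> 1" using least_power_gt_one[OF pm x(2)] by simp
      ultimately show "least_power g x = p"
        using prime_nat_iff[THEN iffD1, OF assms(3), THEN conjunct2, rule_format, of "least_power g x"] by simp
    qed
    show ?thesis using F dv ct by simp
  qed
  have bwd: "\<exists>g\<in>carrier (sym_group n). group.ord (sym_group n) g = p \<and>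
             quasi_semiregular (sym_group n) set_action (k_subsets n k) g"
    if kp: "k < p" "p dvd (n - k)"
  proof -
    define g where "g = gc n k p"
    note gp = gc_props[OF assms kp, folded g_def]
    have gc: "g \<in> carrier (sym_group n)" using gp(3) sym_group_carrier by blast
    have ord: "group.ord (sym_group n) g = p" using ord_sym[OF gc gp(1) gp(4) assms(3)] .
    note sf = sym_facts[OF gc ord assms(3)]
    interpret P: pp g n p by unfold_locales (fact gp(3), fact gp(1), fact assms(3))
    have K: "{1..k} \<in> k_subsets n k" unfolding k_subsets_def using assms(2) by auto
    have "{1..k} \<subseteq> P.Fx"
    proof
      fix x assume "x \<in> {1..k}"
      hence "x \<in> {1..n}" "\<not> (k < x \<and> x \<le> n)" using assms(2) by auto
      thus "x \<in> P.Fx" unfolding P.Fx_def using gp(2)[of x] by simp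
    qed
    hence Kf: "g ` {1..k} = {1..k}" by (rule P.fix_img)
    have U: "w = {1..k}" if w: "w \<in> k_subsets n k" "g ` w = w" for w
    proof -
      have ws: "w \<subseteq> {1..n}" "card w = k" using w(1) unfolding k_subsets_def by auto
      have fw: "finite w" using ws(1) finite_subset by blast
      have "w \<subseteq> {1..k}"
      proof
        fix x assume x: "x \<in> w"
        show "x \<in> {1..k}"
        proof (rule ccontr)
          assume "x \<notin> {1..k}"
          hence "k < x" "x \<le> n" using x ws(1) by auto
          hence gx: "g x \<noteq> x" using gp(2) by simp
          have "P.orb x \<subseteq> w" using P.inv_orb_sub[OF w(2) x] .
          hence "card (P.orb x) \<le> card w" using fw card_mono by blast
          thus False using P.orb_card[OF gx] ws(2) kp(1) by simp
        qed
      qed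
      thus ?thesis using ws(2) by (intro card_subset_eq) auto
    qed
    have "\<exists>w0\<in>k_subsets n k. g ` w0 = w0 \<and> (\<forall>w\<in>k_subsets n k. g ` w = w \<longrightarrow> w = w0)"
      by (rule bexI[OF _ K]) (intro conjI ballI impI Kf U)
    hence "quasi_semiregular (sym_group n) set_action (k_subsets n k) g"
      by (rule iffD2[OF P.qsr_iff[OF sf(3) sym_group_one]])
    thus ?thesis using gc ord by blast
  qed
  show ?thesis using fwd bwd by blast
qed


end
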